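(* Let $n\ge1$, let $f:\{0,1\}^n\to\{0,1\}^n$ be a Boolean model, let $J$ be a nonempty subset of $\{1,\dots,n\}$, and let $h$ be a refinement of $f$ on $X=\prod_{j=1}^n\{0,1,\dots,m_j\}$, where $m_j\ge1$ are integers with $m_j>1$ if and only if $j\in J$. Let $x,y\in X$ and suppose there is a trajectory from $x$ to $y$ in the asynchronous state transition graph of $h$. Then for every element $\hat x\in X_{^Jm.p.}$ compatible with $x$ there exists a trajectory $\hat x\to\cdots\to\hat y$ in the state transition graph of the partial $^J$m.p. dynamics of $f$ such that $\hat y$ is compatible with $y$.
   Context: Asynchronous dynamics of $h:X\to X$ (with $h_j(x)-x_j\in\{-1,0,1\}$): transition $x\to y$ if there is $i_0$ with $x_{i_0}\ne h_{i_0}(x)$, $y_{i_0}=x_{i_0}+\mathrm{sign}(h_{i_0}(x)-x_{i_0})$, $y_j=x_j$ for $j\neq i_0$; a trajectory is a finite sequence of consecutive transitions. For $x\in X$, $\alpha(x)=\{x'\in\{0,1\}^n:\forall j,(x_j=0\Rightarrow x'_j=0),(x_j=m_j\Rightarrow x'_j=1)\}$. A multivalued model $h:X\to X$ (with $h_j(x)-x_j\in\{-1,0,1\}$) is a refinement of $f$ if for all $x\in X$ and $j$: $h_j(x)<x_j\Rightarrow\exists x'\in\alpha(x), f_j(x')<x'_j$, and $h_j(x)>x_j\Rightarrow\exists x'\in\alpha(x), f_j(x')>x'_j$. Partial most permissive scheme: $X_{^Jm.p.}=\prod_{j=1}^n\mathcal A_j$ with $\mathcal A_j=\{0,1,i,d\}$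 if $j\in J$ and $\mathcal A_j=\{0,1\}$ otherwise ($i,d$ are formal symbols). For $x\in X_{^Jm.p.}$, $\gamma(x)=\{x'\in\{0,1\}^n:\forall j,(x_j=0\Rightarrow x'_j=0),(x_j=1\Rightarrow x'_j=1)\}$. There is a transition $x\to y$ in $X_{^Jm.p.}$ if there is $j_0$ with $y_j=x_j$ for $j\neq j_0$ and one of: (a) $x_{j_0}\in\{0,d\}$, $\exists x'\in\gamma(x)$ with $f_{j_0}(x')=1$, and $y_{j_0}=i$; (b) $x_{j_0}\in\{1,i\}$, $\exists x'\in\gamma(x)$ with $f_{j_0}(x')=0$, and $y_{j_0}=d$; (c) $x_{j_0}=i$ and $y_{j_0}=1$; (d) $x_{j_0}=d$ and $y_{j_0}=0$; (e) $j_0\notin J$, $x_{j_0}=0$, $\exists x'\in\gamma(x)$ with $f_{j_0}(x')=1$, and $y_{j_0}=1$; (f) $j_0\notin J$, $x_{j_0}=1$, $\exists x'\in\gamma(x)$ with $f_{j_0}(x')=0$, and $y_{j_0}=0$. An element $\hat x\in X_{^Jm.p.}$ is compatible with $x\in X$ if for every $j$: $x_j=0\Rightarrow\hat x_j=0$; $x_j=m_j\Rightarrow\hat x_j=1$; and $x_j\notin\{0,m_j\}\Rightarrow\hat x_j\in\{i,d\}$. *)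

theory Defs
  imports Main
begin

text \<open>Components are indexed by a finite type 'n (so n = CARD('n) \<ge> 1).
 Boolean states: 'n \<Rightarrow> bool (True = 1). Multivalued states: 'n \<Rightarrow> nat.\<close>

definition stateX :: "('n \<Rightarrow> nat) \<Rightarrow> ('n \<Rightarrow> nat) set" where
  "stateX m = {x. \<forall>j. x j \<le> m j}"

definition alpha :: "('n \<Rightarrow> nat) \<Rightarrow> ('n \<Rightarrow> nat) \<Rightarrow> ('n \<Rightarrow> bool) set" where
  "alpha m x = {x'. \<forall>j. (x j = 0 \<longrightarrow> \<not> x' j) \<and> (x j = m j \<longrightarrow> x' j)}"

definition async_trans :: "('n \<Rightarrow> nat) \<Rightarrow> (('n \<Rightarrow> nat) \<Rightarrow> ('n \<Rightarrow> nat))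
    \<Rightarrow> ('n \<Rightarrow> nat) \<Rightarrow> ('n \<Rightarrow> nat) \<Rightarrow> bool" where
  "async_trans m h x y \<longleftrightarrow> x \<in> stateX m \<and>
     (\<exists>i0. x i0 \<noteq> h x i0 \<and>
        y i0 = (if h x i0 > x i0 then x i0 + 1 else x i0 - 1) \<and>
        (\<forall>j. j \<noteq> i0 \<longrightarrow> y j = x j))"

definition refinement :: "('n \<Rightarrow> nat) \<Rightarrow> (('n \<Rightarrow> bool) \<Rightarrow> ('n \<Rightarrow> bool))
    \<Rightarrow> (('n \<Rightarrow> nat) \<Rightarrow> ('n \<Rightarrow> nat)) \<Rightarrow> bool" where
  "refinement m f h \<longleftrightarrow>
     (\<forall>x\<in>stateX m. h x \<in> stateX m \<and>
        (\<forall>j. \<bar>int (h x j) - int (x j)\<bar> \<le> 1) \<and>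
        (\<forall>j. (h x j < x j \<longrightarrow> (\<exists>x'\<in>alpha m x. \<not> f x' j \<and> x' j)) \<and>
             (h x j > x j \<longrightarrow> (\<exists>x'\<in>alpha m x. f x' j \<and> \<not> x' j))))"

datatype mpval = Zero | One | Inc | Dec

definition stateMP :: "'n set \<Rightarrow> ('n \<Rightarrow> mpval) set" where
  "stateMP J = {x. \<forall>j. j \<notin> J \<longrightarrow> x j \<in> {Zero, One}}"

definition gamma :: "('n \<Rightarrow> mpval) \<Rightarrow> ('n \<Rightarrow> bool) set" where
  "gamma x = {x'. \<forall>j. (x j = Zero \<longrightarrow> \<not> x' j) \<and> (x j = One \<longrightarrow> x' j)}"

definition mp_trans :: "'n set \<Rightarrow> (('n \<Rightarrow> bool) \<Rightarrow> ('n \<Rightarrow> bool))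
    \<Rightarrow> ('n \<Rightarrow> mpval) \<Rightarrow> ('n \<Rightarrow> mpval) \<Rightarrow> bool" where
  "mp_trans J f x y \<longleftrightarrow> x \<in> stateMP J \<and>
     (\<exists>j0. (\<forall>j. j \<noteq> j0 \<longrightarrow> y j = x j) \<and>
        ((x j0 \<in> {Zero, Dec} \<and> (\<exists>x'\<in>gamma x. f x' j0) \<and> y j0 = Inc) \<or>
         (x j0 \<in> {One, Inc} \<and> (\<exists>x'\<in>gamma x. \<not> f x' j0) \<and> y j0 = Dec) \<or>
         (x j0 = Inc \<and> y j0 = One) \<or>
         (x j0 = Dec \<and> y j0 = Zero) \<or>
         (j0 \<notin> J \<and> x j0 = Zero \<and> (\<exists>x'\<in>gamma x. f x' j0) \<and> y j0 = One) \<or>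
         (j0 \<notin> J \<and> x j0 = One \<and> (\<exists>x'\<in>gamma x. \<not> f x' j0) \<and> y j0 = Zero)))"

definition compatible :: "('n \<Rightarrow> nat) \<Rightarrow> ('n \<Rightarrow> nat) \<Rightarrow> ('n \<Rightarrow> mpval) \<Rightarrow> bool" where
  "compatible m x xh \<longleftrightarrow> (\<forall>j.
     (x j = 0 \<longrightarrow> xh j = Zero) \<and> (x j = m j \<longrightarrow> xh j = One) \<and>
     (x j \<notin> {0, m j} \<longrightarrow> xh j \<in> {Inc, Dec}))"

end

theory Submission
  imports Defs
begin

lemma mp_a: "w \<in> stateMP J \<Longrightarrow> w i \<in> {Zero, Dec} \<Longrightarrow> x' \<in> gamma w \<Longrightarrow> f x' i
   \<Longrightarrow> mp_trans J f w (w(i:=Inc))"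
  unfolding mp_trans_def by (rule conjI, assumption, rule exI[of _ i]) auto

lemma mp_b: "w \<in> stateMP J \<Longrightarrow> w i \<in> {One, Inc} \<Longrightarrow> x' \<in> gamma w \<Longrightarrow> \<not> f x' i
   \<Longrightarrow> mp_trans J f w (w(i:=Dec))"
  unfolding mp_trans_def by (rule conjI, assumption, rule exI[of _ i]) auto

lemma mp_c: "w \<in> stateMP J \<Longrightarrow> w i = Inc \<Longrightarrow> mp_trans J f w (w(i:=One))"
  unfolding mp_trans_def by (rule conjI, assumption, rule exI[of _ i]) auto

lemma mp_d: "w \<in> stateMP J \<Longrightarrow> w i = Dec \<Longrightarrow> mp_trans J f w (w(i:=Zero))"
  unfolding mp_trans_def by (rule conjI, assumption, rule exI[of _ i]) auto

lemma mp_e: "w \<in> stateMP J \<Longrightarrow> i \<notin> J \<Longrightarrow> w i = Zero \<Longrightarrow> x' \<in> gamma w \<Longrightarrow> f x' i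
   \<Longrightarrow> mp_trans J f w (w(i:=One))"
  unfolding mp_trans_def by (rule conjI, assumption, rule exI[of _ i]) auto

lemma mp_f: "w \<in> stateMP J \<Longrightarrow> i \<notin> J \<Longrightarrow> w i = One \<Longrightarrow> x' \<in> gamma w \<Longrightarrow> \<not> f x' i
   \<Longrightarrow> mp_trans J f w (w(i:=Zero))"
  unfolding mp_trans_def by (rule conjI, assumption, rule exI[of _ i]) auto

lemma stMP: "w \<in> stateMP J \<Longrightarrow> (i \<notin> J \<longrightarrow> v \<in> {Zero, One}) \<Longrightarrow> w(i:=v) \<in> stateMP J"
  unfolding stateMP_def by auto

lemma step:
  assumes m1: "\<forall>j. m j \<ge> 1" and mJ: "\<forall>j. m j > 1 \<longleftrightarrow> j \<in> J" and ref: "refinement m f h"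
    and tr: "async_trans m h x y" and xs: "xh \<in> stateMP J" and c: "compatible m x xh"
  shows "\<exists>yh. (mp_trans J f)\<^sup>*\<^sup>* xh yh \<and> compatible m y yh \<and> yh \<in> stateMP J"
proof -
  from tr obtain i where xX: "x \<in> stateX m" and ne: "x i \<noteq> h x i"
    and yi: "y i = (if h x i > x i then x i + 1 else x i - 1)"
    and oth: "\<forall>j. j\<noteq>i \<longrightarrow> y j = x j" unfolding async_trans_def by blast
  from ref xX have hX: "h x \<in> stateX m"
    and hinc: "h x i > x i \<Longrightarrow> \<exists>x'\<in>alpha m x. f x' i \<and> \<not> x' i"
    and hdec: "h x i < x i \<Longrightarrow> \<exists>x'\<in>alpha m x. \<not> f x' i \<and> x' i"
    unfolding refinement_def by blast+
  have ag: "alpha m x \<subseteq> gamma xh"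
  proof
    fix x' assume a: "x' \<in> alpha m x"
    show "x' \<in> gamma xh" unfolding gamma_def
    proof (intro CollectI allI conjI impI)
      fix j assume "xh j = Zero"
      then have "x j = 0" using c m1 unfolding compatible_def
        by (metis empty_iff insert_iff mpval.distinct)
      then show "\<not> x' j" using a unfolding alpha_def by auto
    next
      fix j assume "xh j = One"
      then have "x j = m j" using c m1 unfolding compatible_def
        by (metis empty_iff insert_iff mpval.distinct)
      then show "x' j" using a unfolding alpha_def by auto
    qed
  qed
  have comp: "compatible m y (xh(i:=v))" if
    "(y i = 0 \<longrightarrow> v = Zero) \<and> (y i = m i \<longrightarrow> v = One) \<and> (y i \<notin> {0, m i} \<longrightarrow> v \<in> {Inc, Dec})" for v
    using that c oth unfolding compatible_def by auto
  have xim: "x i \<le> m i" "h x i \<le> m i" using xX hX unfolding stateX_def by auto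
  have mi: "m i \<ge> 1" using m1 by auto
  have cxi: "(x i = 0 \<longrightarrow> xh i = Zero) \<and> (x i = m i \<longrightarrow> xh i = One) \<and> (x i \<notin> {0, m i} \<longrightarrow> xh i \<in> {Inc, Dec})"
    using c unfolding compatible_def by blast
  show ?thesis
  proof (cases "h x i > x i")
    case True
    then obtain x' where x': "x' \<in> gamma xh" "f x' i" "\<not> x' i" using hinc ag by blast
    have ny: "y i = x i + 1" using yi True by simp
    have lt: "x i < m i" using True xim by simp
    have nOne: "xh i \<noteq> One" using x' unfolding gamma_def by auto
    show ?thesis
    proof (cases "i \<in> J")
      case False
      then have "m i = 1" using mJ mi by (metis le_neq_implies_less)
      then have "x i = 0" "y i = 1" using lt ny by auto
      then have z: "xh i = Zero" using cxi by simp
      show ?thesis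
        apply (rule exI[of _ "xh(i:=One)"])
        using mp_e[where f=f and i=i and x'=x', OF xs False z x'(1,2)] comp[of One] stMP[OF xs, of i One] \<open>m i = 1\<close> \<open>y i = 1\<close>
        by auto
    next
      case iJ: True
      have "1 < m i" using mJ iJ by blast
      then have m2: "m i \<ge> 2" by simp
      have inc: "xh(i:=Inc) \<in> stateMP J" "xh(i:=One) \<in> stateMP J" "xh(i:=Inc,i:=One) = xh(i:=One)"
        using stMP[OF xs] iJ by auto
      have ab: "mp_trans J f xh (xh(i:=Inc))" if "xh i \<in> {Zero, Dec}"
        using mp_a[where f=f and i=i and x'=x', OF xs that x'(1,2)] .
      have cc: "mp_trans J f (xh(i:=Inc)) (xh(i:=One))"
        using mp_c[OF inc(1), of i f] inc(3) by simp
      have cc2: "mp_trans J f xh (xh(i:=One))" if "xh i = Inc"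
        using mp_c[OF xs that, of f] .
      have yne0: "y i \<noteq> 0" using ny by simp
      consider "xh i = Zero" | "xh i = Dec" | "xh i = Inc" using nOne by (cases "xh i") auto
      then show ?thesis
      proof cases
        case 1
        then have "x i = 0" using cxi by auto
        then have "y i \<notin> {0, m i}" using ny m2 by auto
        then show ?thesis using ab[of] 1 comp[of Inc] inc by (intro exI[of _ "xh(i:=Inc)"]) auto
      next
        case 2
        show ?thesis
        proof (cases "y i = m i")
          case True
          then show ?thesis using ab 2 cc comp[of One] inc yne0
            by (intro exI[of _ "xh(i:=One)"]) (auto intro: converse_rtranclp_into_rtranclp)
        next
          case False
          then show ?thesis using ab 2 comp[of Inc] inc yne0
            by (intro exI[of _ "xh(i:=Inc)"]) auto
        qed
      next
        case 3
        show ?thesis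
        proof (cases "y i = m i")
          case True
          then show ?thesis using cc2 3 comp[of One] inc yne0
            by (intro exI[of _ "xh(i:=One)"]) auto
        next
          case False
          then have "xh(i:=Inc) = xh" using 3 by auto
          then show ?thesis using False comp[of Inc] xs yne0
            by (intro exI[of _ "xh"]) auto
        qed
      qed
    qed
  next
    case False
    then have lt0: "h x i < x i" using ne by simp
    then obtain x' where x': "x' \<in> gamma xh" "\<not> f x' i" "x' i" using hdec ag by blast
    have ny: "y i = x i - 1" using yi False by simp
    have pos: "x i > 0" using lt0 by simp
    have nZero: "xh i \<noteq> Zero" using x' unfolding gamma_def by auto
    show ?thesis
    proof (cases "i \<in> J")
      case False
      then have "m i = 1" using mJ mi by (metis le_neq_implies_less)
      then have "x i = 1" "y i = 0" using pos ny xim by auto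
      then have z: "xh i = One" using cxi \<open>m i = 1\<close> by simp
      show ?thesis
        apply (rule exI[of _ "xh(i:=Zero)"])
        using mp_f[where f=f and i=i and x'=x', OF xs False z x'(1,2)] comp[of Zero] stMP[OF xs, of i Zero] \<open>m i = 1\<close> \<open>y i = 0\<close>
        by auto
    next
      case iJ: True
      have "1 < m i" using mJ iJ by blast
      then have m2: "m i \<ge> 2" by simp
      have dec: "xh(i:=Dec) \<in> stateMP J" "xh(i:=Zero) \<in> stateMP J" "xh(i:=Dec,i:=Zero) = xh(i:=Zero)"
        using stMP[OF xs] iJ by auto
      have ab: "mp_trans J f xh (xh(i:=Dec))" if "xh i \<in> {One, Inc}"
        using mp_b[where f=f and i=i and x'=x', OF xs that x'(1,2)] .
      have cc: "mp_trans J f (xh(i:=Dec)) (xh(i:=Zero))"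
        using mp_d[OF dec(1), of i f] dec(3) by simp
      have cc2: "mp_trans J f xh (xh(i:=Zero))" if "xh i = Dec"
        using mp_d[OF xs that, of f] .
      have ynem: "y i \<noteq> m i" using ny pos xim by simp
      consider "xh i = One" | "xh i = Inc" | "xh i = Dec" using nZero by (cases "xh i") auto
      then show ?thesis
      proof cases
        case 1
        then have "x i = m i" using cxi by auto
        then have "y i \<notin> {0, m i}" using ny m2 by auto
        then show ?thesis using ab[of] 1 comp[of Dec] dec by (intro exI[of _ "xh(i:=Dec)"]) auto
      next
        case 2
        show ?thesis
        proof (cases "y i = 0")
          case True
          then show ?thesis using ab 2 cc comp[of Zero] dec ynem
            by (intro exI[of _ "xh(i:=Zero)"]) (auto intro: converse_rtranclp_into_rtranclp)
        next
          case False
          then show ?thesis using ab 2 comp[of Dec] dec ynem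
            by (intro exI[of _ "xh(i:=Dec)"]) auto
        qed
      next
        case 3
        show ?thesis
        proof (cases "y i = 0")
          case True
          then show ?thesis using cc2 3 comp[of Zero] dec ynem
            by (intro exI[of _ "xh(i:=Zero)"]) auto
        next
          case False
          then have "xh(i:=Dec) = xh" using 3 by auto
          then show ?thesis using False comp[of Dec] xs ynem
            by (intro exI[of _ "xh"]) auto
        qed
      qed
    qed
  qed
qed

theorem theorem2:
  fixes f :: "('n::finite \<Rightarrow> bool) \<Rightarrow> ('n \<Rightarrow> bool)"
    and J :: "'n set"
    and m :: "'n \<Rightarrow> nat"
    and h :: "('n \<Rightarrow> nat) \<Rightarrow> ('n \<Rightarrow> nat)"
    and x y :: "'n \<Rightarrow> nat"
    and xh :: "'n \<Rightarrow> mpval"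
  assumes "J \<noteq> {}"
    and "\<forall>j. m j \<ge> 1"
    and "\<forall>j. m j > 1 \<longleftrightarrow> j \<in> J"
    and "refinement m f h"
    and "x \<in> stateX m" and "y \<in> stateX m"
    and "(async_trans m h)\<^sup>*\<^sup>* x y"
    and "xh \<in> stateMP J"
    and "compatible m x xh"
  shows "\<exists>yh. (mp_trans J f)\<^sup>*\<^sup>* xh yh \<and> compatible m y yh"
proof -
  have "\<exists>yh. (mp_trans J f)\<^sup>*\<^sup>* xh yh \<and> compatible m y yh \<and> yh \<in> stateMP J"
    using assms(7)
  proof (induction rule: rtranclp_induct)
    case base
    then show ?case using assms(8,9) by blast
  next
    case (step y z)
    then obtain yh where yh: "(mp_trans J f)\<^sup>*\<^sup>* xh yh" "compatible m y yh" "yh \<in> stateMP J" by blast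
    from step.hyps(2) obtain zh where "(mp_trans J f)\<^sup>*\<^sup>* yh zh" "compatible m z zh" "zh \<in> stateMP J"
      using Submission.step[OF assms(2,3,4) step.hyps(2) yh(3,2)] by blast
    then show ?case using yh(1) by (meson rtranclp_trans)
  qed
  then show ?thesis by blast
qed

end
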